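(* For $r\ge1$ let $A_1^r=\{(\alpha_1,\alpha_2,\alpha_3)\in\mathbb{Z}_{\ge0}^3:\alpha_1\le1,\ \alpha_3=0,\ |\alpha|\le r\}$, $A_2^r=\{(\alpha_1,\alpha_2,\alpha_3):\alpha_1\le1,\ \alpha_2=0,\ \alpha_3\ge1,\ |\alpha|\le r\}$ and $\mathcal F_r=A_1^r\cup A_2^r$. Let $f(x|\theta,v,m)$ be the skew-normal kernel. Then for every $\alpha=(\alpha_1,\alpha_2,\alpha_3)\in\mathbb{Z}_{\ge0}^3$ there are polynomials $P^{\kappa}_{\alpha}(m)$, $H^{\kappa}_{\alpha}(m)$, $Q^{\kappa}_{\alpha}(v)$ (indexed by $\kappa$ in the set below), with $H^\kappa_\alpha(m)\ne0$ for $m\neq0$ and $Q^\kappa_\alpha(v)\ne0$ for $v>0$, such that for all $x,\theta\in\mathbb{R}$, $v>0$ and $m\neq0$, $$\frac{\partial^{|\alpha|}f}{\partial\theta^{\alpha_1}\partial v^{\alpha_2}\partial m^{\alpha_3}}=\sum_{\kappa}\frac{P^{\kappa}_{\alpha}(m)}{H^{\kappa}_{\alpha}(m)Q^{\kappa}_{\alpha}(v)}\frac{\partial^{|\kappa|}f}{\partial\theta^{\kappa_1}\partial v^{\kappa_2}\partial m^{\kappa_3}},$$ where the sum ranges over $\kappa\in\mathcal F_{|\alpha|}$ with $\kappa_1+2\kappa_2+2\kappa_3\le\alpha_1+2\alpha_2+2\alpha_3$.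
   Context: Skew-normal kernel: $f(x|\theta,v,m)=\frac{2}{\sigma}\varphi\!\left(\frac{x-\theta}{\sigma}\right)\Phi\!\left(\frac{m(x-\theta)}{\sigma}\right)$ with $\sigma=\sqrt v$, $\varphi,\Phi$ the standard normal density and cdf. $|\alpha|=\alpha_1+\alpha_2+\alpha_3$. *)

theory Defs
  imports "HOL-Probability.Probability" "HOL-Computational_Algebra.Polynomial"
begin

definition Phi :: "real \<Rightarrow> real" where
  "Phi z = (LBINT t:{..z}. std_normal_density t)"

definition skewnorm :: "real \<Rightarrow> real \<Rightarrow> real \<Rightarrow> real \<Rightarrow> real" where
  "skewnorm x \<theta> v m =
     2 / sqrt v * std_normal_density ((x - \<theta>) / sqrt v) * Phi (m * (x - \<theta>) / sqrt v)"

definition d_theta :: "(real \<Rightarrow> real \<Rightarrow> real \<Rightarrow> real \<Rightarrow> real) \<Rightarrow> real \<Rightarrow> real \<Rightarrow> real \<Rightarrow> real \<Rightarrow> real" where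
  "d_theta g = (\<lambda>x \<theta> v m. deriv (\<lambda>t. g x t v m) \<theta>)"
definition d_v :: "(real \<Rightarrow> real \<Rightarrow> real \<Rightarrow> real \<Rightarrow> real) \<Rightarrow> real \<Rightarrow> real \<Rightarrow> real \<Rightarrow> real \<Rightarrow> real" where
  "d_v g = (\<lambda>x \<theta> v m. deriv (\<lambda>t. g x \<theta> t m) v)"
definition d_m :: "(real \<Rightarrow> real \<Rightarrow> real \<Rightarrow> real \<Rightarrow> real) \<Rightarrow> real \<Rightarrow> real \<Rightarrow> real \<Rightarrow> real \<Rightarrow> real" where
  "d_m g = (\<lambda>x \<theta> v m. deriv (\<lambda>t. g x \<theta> v t) m)"

definition Dskew :: "nat \<times> nat \<times> nat \<Rightarrow> real \<Rightarrow> real \<Rightarrow> real \<Rightarrow> real \<Rightarrow> real" where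
  "Dskew \<alpha> = (case \<alpha> of (a1, a2, a3) \<Rightarrow> (d_theta ^^ a1) ((d_v ^^ a2) ((d_m ^^ a3) skewnorm)))"

definition abs3 :: "nat \<times> nat \<times> nat \<Rightarrow> nat" where
  "abs3 \<alpha> = (case \<alpha> of (a1, a2, a3) \<Rightarrow> a1 + a2 + a3)"

definition A1 :: "nat \<Rightarrow> (nat \<times> nat \<times> nat) set" where
  "A1 r = {(a1, a2, a3). a1 \<le> 1 \<and> a3 = 0 \<and> a1 + a2 + a3 \<le> r}"
definition A2 :: "nat \<Rightarrow> (nat \<times> nat \<times> nat) set" where
  "A2 r = {(a1, a2, a3). a1 \<le> 1 \<and> a2 = 0 \<and> a3 \<ge> 1 \<and> a1 + a2 + a3 \<le> r}"
definition F_set :: "nat \<Rightarrow> (nat \<times> nat \<times> nat) set" where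
  "F_set r = A1 r \<union> A2 r"

definition wt :: "nat \<times> nat \<times> nat \<Rightarrow> nat" where
  "wt \<alpha> = (case \<alpha> of (a1, a2, a3) \<Rightarrow> a1 + 2 * a2 + 2 * a3)"

definition Kset :: "nat \<times> nat \<times> nat \<Rightarrow> (nat \<times> nat \<times> nat) set" where
  "Kset \<alpha> = {\<kappa> \<in> F_set (abs3 \<alpha>). wt \<kappa> \<le> wt \<alpha>}"

end

theory Submission
  imports Defs "HOL-Library.Product_Plus"
begin

lemma Phi_alt: "Phi z = (LBINT t=-\<infinity>..0. std_normal_density t) + (LBINT t=0..ereal z. std_normal_density t)"
proof -
  have int: "integrable lborel std_normal_density" by simp
  have "Phi z = (LBINT t:{..<z}. std_normal_density t)"
    unfolding Phi_def
    by (rule set_integral_discrete_difference[where X="{z}"]) auto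
  also have "\<dots> = (LBINT t=-\<infinity>..ereal z. std_normal_density t)"
    by (simp add: interval_lebesgue_integral_def einterval_eq_Iic)
  also have "\<dots> = (LBINT t=-\<infinity>..0. std_normal_density t) + (LBINT t=0..ereal z. std_normal_density t)"
  proof (rule interval_integral_sum[symmetric])
    show "interval_lebesgue_integrable lborel (min (- \<infinity>) (min 0 (ereal z))) (max (- \<infinity>) (max 0 (ereal z))) std_normal_density"
    proof -
      have U: "set_integrable lborel UNIV std_normal_density" by (simp add: set_integrable_def int)
      show ?thesis unfolding interval_lebesgue_integrable_def
        by (simp add: set_integrable_subset[OF U])
    qed
  qed
  finally show ?thesis .
qed

lemma DERIV_Phi: "(Phi has_real_derivative std_normal_density x) (at x)"
proof -
  have c: "continuous_on A std_normal_density" for A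
    unfolding std_normal_density_def by (intro continuous_intros) auto
  have "(at x within {min 0 (x - 1)..max 0 (x + 1)}) = at x"
    by (intro at_within_interior) auto
  moreover have "min 0 (x - 1) \<le> x" "x \<le> max 0 (x + 1)"
    by auto
  ultimately have D: "((\<lambda>u. LBINT y=0..ereal u. std_normal_density y) has_real_derivative std_normal_density x) (at x)"
    using interval_integral_FTC2[of "min 0 (x - 1)" 0 "max 0 (x + 1)" std_normal_density x]
    by (auto simp: c zero_ereal_def has_real_derivative_iff_has_vector_derivative split del: if_split)
  then show ?thesis
    unfolding Phi_alt[abs_def] using DERIV_add[OF DERIV_const D] by simp
qed


type_synonym pp = "real poly poly"

definition pm :: "pp \<Rightarrow> pp" where "pm A = map_poly pderiv A"

lemma coeff_pm: "coeff (pm A) n = pderiv (coeff A n)"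
  unfolding pm_def by (simp add: coeff_map_poly)

lemma pm_add[simp]: "pm (A + B) = pm A + pm B"
  by (rule poly_eqI) (simp add: coeff_pm pderiv_add)
lemma pm_diff[simp]: "pm (A - B) = pm A - pm B"
  by (rule poly_eqI) (simp add: coeff_pm pderiv_diff)
lemma pm_uminus[simp]: "pm (- A) = - pm A"
  by (rule poly_eqI) (simp add: coeff_pm pderiv_minus)
lemma pm_0[simp]: "pm 0 = 0"
  by (rule poly_eqI) (simp add: coeff_pm)
lemma pm_const[simp]: "pm [:p:] = [:pderiv p:]"
  by (rule poly_eqI) (simp add: coeff_pm coeff_pCons split: nat.split)
lemma pm_1[simp]: "pm 1 = 0"
  by (simp add: one_pCons)

lemma pderiv_sum': "pderiv (sum f S) = (\<Sum>x\<in>S. pderiv (f x))"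
  by (induction S rule: infinite_finite_induct) (auto simp: pderiv_add)

lemma pm_mult[simp]: "pm (A * B) = pm A * B + A * pm B"
proof (rule poly_eqI)
  fix n
  show "coeff (pm (A * B)) n = coeff (pm A * B + A * pm B) n"
  proof -
    have e: "pderiv (p * q) = pderiv p * q + p * pderiv q" for p q :: "real poly"
      by (simp add: pderiv_mult algebra_simps)
    show ?thesis
      by (simp add: coeff_pm coeff_mult pderiv_sum' e sum.distrib)
  qed
qed

lemma pm_sum: "pm (sum f S) = (\<Sum>x\<in>S. pm (f x))"
  by (induction S rule: infinite_finite_induct) auto

lemma pm_power: "pm (A ^ Suc n) = of_nat (Suc n) * A ^ n * pm A"
  by (induction n) (auto simp: algebra_simps)

lemma pm_pderiv: "pm (pderiv A) = pderiv (pm A)"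
proof (rule poly_eqI)
  fix n
  have "pderiv ((1 + of_nat k) * p) = (1 + of_nat k) * pderiv p" for k and p :: "real poly"
    by (simp add: pderiv_mult pderiv_add)
  then show "coeff (pm (pderiv A)) n = coeff (pderiv (pm A)) n"
    by (simp add: coeff_pm coeff_pderiv)
qed

definition Zp :: pp where "Zp = [:0, 1:]"
definition Mp :: pp where "Mp = [:[:0, 1:]:]"
definition cp :: "real \<Rightarrow> pp" where "cp r = [:[:r:]:]"

lemma pm_Zp[simp]: "pm Zp = 0"
  by (rule poly_eqI) (simp add: Zp_def coeff_pm coeff_pCons split: nat.split)
lemma pderiv_X1: "pderiv [:0, 1::real:] = 1"
  by (rule poly_eqI) (simp add: coeff_pderiv coeff_pCons split: nat.split)
lemma pm_Mp[simp]: "pm Mp = 1"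
  by (simp add: Mp_def one_pCons pderiv_X1)
lemma pm_cp[simp]: "pm (cp r) = 0"
  by (simp add: cp_def)
lemma pderiv_Zp[simp]: "pderiv Zp = 1"
  by (rule poly_eqI) (simp add: Zp_def coeff_pderiv coeff_pCons split: nat.split)
lemma pderiv_Mp[simp]: "pderiv Mp = 0"
  by (simp add: Mp_def pderiv_pCons)
lemma pderiv_cp[simp]: "pderiv (cp r) = 0"
  by (simp add: cp_def pderiv_pCons)
lemma pderiv_1'[simp]: "pderiv (1::pp) = 0"
  by (simp add: one_pCons pderiv_pCons)
lemma cp_add: "cp (a + b) = cp a + cp b" by (simp add: cp_def)
lemma cp_mult: "cp (a * b) = cp a * cp b" by (simp add: cp_def)
lemma cp_minus: "cp (- a) = - cp a" by (simp add: cp_def)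
lemma cp_1[simp]: "cp 1 = 1" by (simp add: cp_def one_pCons)
lemma cp_0[simp]: "cp 0 = 0" by (simp add: cp_def)
lemma cp_of_nat: "cp (of_nat n) = of_nat n"
  by (induction n) (auto simp: cp_add)
lemma half2: "cp (1/2) * 2 = 1"
proof -
  have "cp (1/2) * cp 2 = cp 1" by (simp only: cp_mult[symmetric]) simp
  moreover have "cp 2 = 2" using cp_of_nat[of 2] by simp
  ultimately show ?thesis by simp
qed


definition cc :: real where "cc = 1 / sqrt (2*pi)"

definition Dz :: "pp \<times> pp \<Rightarrow> pp \<times> pp" where
  "Dz X = (pderiv (fst X) - Zp * fst X,
           pderiv (snd X) - (1 + Mp^2) * Zp * snd X + cp cc * Mp * fst X)"
definition Tth :: "pp \<times> pp \<Rightarrow> pp \<times> pp" where "Tth X = - Dz X"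
definition sc :: "pp \<Rightarrow> pp \<times> pp \<Rightarrow> pp \<times> pp" where "sc K X = (K * fst X, K * snd X)"
definition Tv :: "nat \<Rightarrow> pp \<times> pp \<Rightarrow> pp \<times> pp" where
  "Tv d X = sc (- (of_nat d + 1) * cp (1/2)) X - sc (cp (1/2) * Zp) (Dz X)"
definition Tm :: "pp \<times> pp \<Rightarrow> pp \<times> pp" where
  "Tm X = (pm (fst X), pm (snd X) + cp cc * Zp * fst X - Mp * Zp^2 * snd X)"

lemma pderiv_Mp2[simp]: "pderiv (Mp^2) = 0"
  by (simp add: pderiv_power)
lemma pm_Mp2[simp]: "pm (Mp^2) = 2 * Mp"
  by (simp add: power2_eq_square)
lemma pm_Zp2[simp]: "pm (Zp^2) = 0"
  by (simp add: power2_eq_square)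
lemma pderiv_Zp2[simp]: "pderiv (Zp^2) = 2 * Zp"
  by (simp add: power2_eq_square pderiv_mult)

lemmas dsimps = pderiv_add pderiv_diff pderiv_minus pderiv_mult pm_pderiv

lemma C1: "Tm (Dz (A,B)) = Dz (Tm (A,B))"
  by (simp add: Tm_def Dz_def dsimps, algebra)

lemma C2: "Tm (Tv d (A,B)) = Tv d (Tm (A,B))"
  by (simp add: Tm_def Tv_def sc_def Dz_def dsimps cp_of_nat[symmetric], algebra)

lemma C3: "Tth (Tv d (A,B)) = Tv (Suc d) (Tth (A,B))"
  by (simp add: Tth_def Tv_def sc_def Dz_def dsimps, algebra)

lemma C1': "Tm (Tth (A,B)) = Tth (Tm (A,B))"
  by (simp add: Tm_def Tth_def Dz_def dsimps, algebra)
lemma C1g: "Tm (Dz X) = Dz (Tm X)" using C1 by (metis surj_pair)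
lemma C2g: "Tm (Tv d X) = Tv d (Tm X)" using C2 by (metis surj_pair)
lemma C3g: "Tth (Tv d X) = Tv (Suc d) (Tth X)" using C3 by (metis surj_pair)
lemma C1g': "Tm (Tth X) = Tth (Tm X)" using C1' by (metis surj_pair)

definition A0 :: pp where "A0 = cp (2 * cc)"
definition f0 :: "pp \<times> pp" where "f0 = (A0, 0)"

lemma pderiv_A0[simp]: "pderiv A0 = 0" by (simp add: A0_def)
lemma pm_A0[simp]: "pm A0 = 0" by (simp add: A0_def)


lemma PDE: "Tth (Tth f0) = sc 2 (Tv 0 f0) - sc (Mp * (1 + Mp^2)) (Tm f0)"
  using half2 by (simp add: f0_def Tth_def Tv_def Tm_def sc_def Dz_def dsimps, algebra)

lemma R3base: "sc (2 * Mp) (Tv 0 (Tm f0)) = sc (-2 * Mp) (Tm f0) + sc (-(1 + Mp^2)) (Tm (Tm f0))"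
  using half2 by (simp add: f0_def Tth_def Tv_def Tm_def sc_def Dz_def dsimps, algebra)


lemma sc_add: "sc K (X + Y) = sc K X + sc K Y" by (simp add: sc_def algebra_simps)
lemma sc_zero[simp]: "sc K 0 = 0" by (simp add: sc_def zero_prod_def)
lemma sc_0[simp]: "sc 0 X = 0" by (simp add: sc_def zero_prod_def)
lemma sc_1[simp]: "sc 1 X = X" by (simp add: sc_def)
lemma sc_sc: "sc K (sc L X) = sc (K * L) X" by (simp add: sc_def algebra_simps)
lemma sc_plusK: "sc (K + L) X = sc K X + sc L X" by (simp add: sc_def algebra_simps)
lemma sc_diff: "sc K (X - Y) = sc K X - sc K Y" by (simp add: sc_def algebra_simps)
lemma sc_sum: "sc K (sum f S) = (\<Sum>i\<in>S. sc K (f i))"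
  by (induction S rule: infinite_finite_induct) (auto simp: sc_add)

lemma Dz_add: "Dz (X + Y) = Dz X + Dz Y" by (simp add: Dz_def dsimps algebra_simps)
lemma Dz_zero[simp]: "Dz 0 = 0" by (simp add: Dz_def zero_prod_def)
lemma Dz_sc: "pderiv K = 0 \<Longrightarrow> Dz (sc K X) = sc K (Dz X)"
  by (simp add: Dz_def sc_def dsimps algebra_simps)
lemma Tth_add: "Tth (X + Y) = Tth X + Tth Y" by (simp add: Tth_def Dz_add)
lemma Tth_zero[simp]: "Tth 0 = 0" by (simp add: Tth_def)
lemma Tth_sc: assumes "pderiv K = 0" shows "Tth (sc K X) = sc K (Tth X)"
proof -
  have "Dz (sc K X) = sc K (Dz X)" using assms by (rule Dz_sc)
  then show ?thesis by (simp add: Tth_def sc_def)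
qed
lemma Tv_add: "Tv d (X + Y) = Tv d X + Tv d Y" by (simp add: Tv_def Dz_add sc_add)
lemma Tv_zero[simp]: "Tv d 0 = 0" by (simp add: Tv_def)
lemma Tv_sc: "pderiv K = 0 \<Longrightarrow> Tv d (sc K X) = sc K (Tv d X)"
  by (simp add: Tv_def Dz_sc sc_sc sc_diff mult.commute)
lemma Tm_add: "Tm (X + Y) = Tm X + Tm Y" by (simp add: Tm_def algebra_simps)
lemma Tm_zero[simp]: "Tm 0 = 0" by (simp add: Tm_def zero_prod_def)
lemma Tm_sc: "Tm (sc K X) = sc (pm K) X + sc K (Tm X)"
  by (simp add: Tm_def sc_def algebra_simps)
lemma Tv_shift: "Tv (d + e) X = Tv d X + sc (- of_nat e * cp (1/2)) X"
  by (simp add: Tv_def sc_def algebra_simps)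

lemma Tth_sum: "Tth (sum f S) = (\<Sum>i\<in>S. Tth (f i))"
  by (induction S rule: infinite_finite_induct) (auto simp: Tth_add)
lemma Tv_sum: "Tv d (sum f S) = (\<Sum>i\<in>S. Tv d (f i))"
  by (induction S rule: infinite_finite_induct) (auto simp: Tv_add)
lemma Tm_sum: "Tm (sum f S) = (\<Sum>i\<in>S. Tm (f i))"
  by (induction S rule: infinite_finite_induct) (auto simp: Tm_add)

lemma pderiv_const[simp]: "pderiv [:p:] = 0" by (simp add: pderiv_pCons)
lemma const_mult: "[:a:] * [:b:] = [:a * b:]" by (simp add: mult.commute)

fun TvIt :: "nat \<Rightarrow> nat \<Rightarrow> pp \<times> pp \<Rightarrow> pp \<times> pp" where
  "TvIt d 0 X = X"
| "TvIt d (Suc q) X = Tv (d + 2 * q) (TvIt d q X)"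

definition rep :: "nat \<times> nat \<times> nat \<Rightarrow> pp \<times> pp" where
  "rep \<alpha> = (case \<alpha> of (a1, a2, a3) \<Rightarrow> (Tth ^^ a1) (TvIt 0 a2 ((Tm ^^ a3) f0)))"

definition dd :: "nat \<times> nat \<times> nat \<Rightarrow> nat" where
  "dd \<alpha> = (case \<alpha> of (a1, a2, a3) \<Rightarrow> a1 + 2 * a2)"

lemma dd_simp[simp]: "dd (a, b, c) = a + 2 * b" by (simp add: dd_def)

lemma Kset_iff[simp]: "(k1, k2, k3) \<in> Kset (a1, a2, a3) \<longleftrightarrow>
   k1 \<le> 1 \<and> (k3 = 0 \<or> (k2 = 0 \<and> 1 \<le> k3)) \<and> k1 + k2 + k3 \<le> a1 + a2 + a3 \<and>
   k1 + 2 * k2 + 2 * k3 \<le> a1 + 2 * a2 + 2 * a3"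
  by (auto simp: Kset_def F_set_def A1_def A2_def abs3_def wt_def)

lemma finite_Kset[simp]: "finite (Kset \<alpha>)"
proof -
  obtain a1 a2 a3 where a: "\<alpha> = (a1, a2, a3)" by (metis surj_pair)
  let ?n = "a1 + a2 + a3"
  have "Kset \<alpha> \<subseteq> {..?n} \<times> {..?n} \<times> {..?n}"
    using a by (auto simp: Kset_def F_set_def A1_def A2_def abs3_def)
  then show ?thesis by (rule finite_subset) auto
qed

definition GT :: "(nat \<times> nat \<times> nat) set" where "GT = {(0, 0, j) | j. True}"

definition SpanK :: "nat \<Rightarrow> (nat \<times> nat \<times> nat) set \<Rightarrow> pp \<times> pp \<Rightarrow> bool" where
  "SpanK d K X \<longleftrightarrow> (\<exists>H P. (\<forall>m::real. m \<noteq> 0 \<longrightarrow> poly H m \<noteq> 0) \<and>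
     (\<forall>\<kappa>\<in>K. P \<kappa> \<noteq> 0 \<longrightarrow> dd \<kappa> \<le> d \<and> even (d - dd \<kappa>)) \<and>
     sc [:H:] X = (\<Sum>\<kappa>\<in>K. sc [:P \<kappa>:] (rep \<kappa>)))"

lemma sc_sc_c: "sc [:a:] (sc [:b:] X) = sc [:a * b:] X"
  by (simp only: sc_sc const_mult)
lemma add_const: "[:a:] + [:b:] = [:a + b:]" by simp
lemma sc_comb: "sc [:a:] (sc [:b:] X) + sc [:c:] (sc [:e:] X) = sc [:a*b + c*e:] X"
  by (simp only: sc_sc_c sc_plusK[symmetric] add_const)

lemma span_zero: "SpanK d K 0"
  unfolding SpanK_def by (rule exI[of _ 1], rule exI[of _ "\<lambda>_. 0"]) simp

lemma span_add:
  assumes "SpanK d K X" "SpanK d K Y"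
  shows "SpanK d K (X + Y)"
proof -
  obtain H1 P1 where 1: "\<forall>m::real. m \<noteq> 0 \<longrightarrow> poly H1 m \<noteq> 0"
    "\<forall>\<kappa>\<in>K. P1 \<kappa> \<noteq> 0 \<longrightarrow> dd \<kappa> \<le> d \<and> even (d - dd \<kappa>)"
    "sc [:H1:] X = (\<Sum>\<kappa>\<in>K. sc [:P1 \<kappa>:] (rep \<kappa>))"
    using assms(1) unfolding SpanK_def by blast
  obtain H2 P2 where 2: "\<forall>m::real. m \<noteq> 0 \<longrightarrow> poly H2 m \<noteq> 0"
    "\<forall>\<kappa>\<in>K. P2 \<kappa> \<noteq> 0 \<longrightarrow> dd \<kappa> \<le> d \<and> even (d - dd \<kappa>)"
    "sc [:H2:] Y = (\<Sum>\<kappa>\<in>K. sc [:P2 \<kappa>:] (rep \<kappa>))"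
    using assms(2) unfolding SpanK_def by blast
  have "sc [:H1 * H2:] (X + Y) = sc [:H2:] (sc [:H1:] X) + sc [:H1:] (sc [:H2:] Y)"
    by (simp only: sc_sc_c sc_add mult.commute)
  also have "\<dots> = (\<Sum>\<kappa>\<in>K. sc [:H2:] (sc [:P1 \<kappa>:] (rep \<kappa>))) + (\<Sum>\<kappa>\<in>K. sc [:H1:] (sc [:P2 \<kappa>:] (rep \<kappa>)))"
    by (simp only: 1(3) 2(3) sc_sum)
  also have "\<dots> = (\<Sum>\<kappa>\<in>K. sc [:H2:] (sc [:P1 \<kappa>:] (rep \<kappa>)) + sc [:H1:] (sc [:P2 \<kappa>:] (rep \<kappa>)))"
    by (simp only: sum.distrib)
  also have "\<dots> = (\<Sum>\<kappa>\<in>K. sc [:H2 * P1 \<kappa> + H1 * P2 \<kappa>:] (rep \<kappa>))"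
    by (simp only: sc_comb)
  finally have eq: "sc [:H1 * H2:] (X + Y) = (\<Sum>\<kappa>\<in>K. sc [:H2 * P1 \<kappa> + H1 * P2 \<kappa>:] (rep \<kappa>))" .
  show ?thesis
    unfolding SpanK_def
  proof (intro exI[of _ "H1 * H2"] exI[of _ "\<lambda>\<kappa>. H2 * P1 \<kappa> + H1 * P2 \<kappa>"] conjI)
    show "\<forall>m::real. m \<noteq> 0 \<longrightarrow> poly (H1 * H2) m \<noteq> 0" using 1(1) 2(1) by simp
    show "\<forall>\<kappa>\<in>K. H2 * P1 \<kappa> + H1 * P2 \<kappa> \<noteq> 0 \<longrightarrow> dd \<kappa> \<le> d \<and> even (d - dd \<kappa>)"
    proof (intro ballI impI)
      fix \<kappa> assume k: "\<kappa> \<in> K" "H2 * P1 \<kappa> + H1 * P2 \<kappa> \<noteq> 0"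
      then have "P1 \<kappa> \<noteq> 0 \<or> P2 \<kappa> \<noteq> 0" by auto
      then show "dd \<kappa> \<le> d \<and> even (d - dd \<kappa>)" using 1(2) 2(2) k(1) by blast
    qed
  qed (rule eq)
qed

lemma span_sc:
  assumes "SpanK d K X" shows "SpanK d K (sc [:p:] X)"
proof -
  obtain H P where 1: "\<forall>m::real. m \<noteq> 0 \<longrightarrow> poly H m \<noteq> 0"
    "\<forall>\<kappa>\<in>K. P \<kappa> \<noteq> 0 \<longrightarrow> dd \<kappa> \<le> d \<and> even (d - dd \<kappa>)"
    "sc [:H:] X = (\<Sum>\<kappa>\<in>K. sc [:P \<kappa>:] (rep \<kappa>))"
    using assms(1) unfolding SpanK_def by blast
  have "sc [:H:] (sc [:p:] X) = sc [:p:] (sc [:H:] X)" by (simp only: sc_sc_c mult.commute)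
  also have "\<dots> = (\<Sum>\<kappa>\<in>K. sc [:p:] (sc [:P \<kappa>:] (rep \<kappa>)))" by (simp only: 1(3) sc_sum)
  also have "\<dots> = (\<Sum>\<kappa>\<in>K. sc [:p * P \<kappa>:] (rep \<kappa>))" by (simp only: sc_sc_c)
  finally have eq: "sc [:H:] (sc [:p:] X) = (\<Sum>\<kappa>\<in>K. sc [:p * P \<kappa>:] (rep \<kappa>))" .
  show ?thesis unfolding SpanK_def
    by (rule exI[of _ H], rule exI[of _ "\<lambda>\<kappa>. p * P \<kappa>"]) (use 1 eq in auto)
qed

lemma span_div:
  assumes "SpanK d K (sc [:h:] X)" "\<forall>m::real. m \<noteq> 0 \<longrightarrow> poly h m \<noteq> 0"
  shows "SpanK d K X"
proof -
  obtain H P where 1: "\<forall>m::real. m \<noteq> 0 \<longrightarrow> poly H m \<noteq> 0"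
    "\<forall>\<kappa>\<in>K. P \<kappa> \<noteq> 0 \<longrightarrow> dd \<kappa> \<le> d \<and> even (d - dd \<kappa>)"
    "sc [:H:] (sc [:h:] X) = (\<Sum>\<kappa>\<in>K. sc [:P \<kappa>:] (rep \<kappa>))"
    using assms(1) unfolding SpanK_def by blast
  have eq: "sc [:H * h:] X = (\<Sum>\<kappa>\<in>K. sc [:P \<kappa>:] (rep \<kappa>))"
    using 1(3) by (simp only: sc_sc_c)
  show ?thesis unfolding SpanK_def
    by (rule exI[of _ "H * h"], rule exI[of _ P]) (use 1 eq assms(2) in auto)
qed

lemma span_sum: "finite S \<Longrightarrow> (\<And>i. i \<in> S \<Longrightarrow> SpanK d K (f i)) \<Longrightarrow> SpanK d K (\<Sum>i\<in>S. f i)"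
  by (induction S rule: finite_induct) (auto intro: span_zero span_add)

lemma sc_cm1: "sc [:-1:] X = - X" by (cases X) (simp add: sc_def)
lemma sc_c1: "sc [:1:] X = X" by (cases X) (simp add: sc_def)
lemma sc_c0: "sc [:0:] X = 0" by (simp add: sc_def zero_prod_def)

lemma span_neg: "SpanK d K X \<Longrightarrow> SpanK d K (- X)"
  using span_sc[of d K X "-1"] by (simp only: sc_cm1)

lemma span_diff: "SpanK d K X \<Longrightarrow> SpanK d K Y \<Longrightarrow> SpanK d K (X - Y)"
  using span_add[of d K X "- Y"] span_neg by simp

lemma span_single:
  assumes "\<kappa> \<in> K" "finite K" "dd \<kappa> \<le> d" "even (d - dd \<kappa>)"
  shows "SpanK d K (rep \<kappa>)"
  unfolding SpanK_def
proof (intro exI[of _ 1] exI[of _ "\<lambda>\<iota>. if \<iota> = \<kappa> then 1 else 0"] conjI)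
  have "(\<Sum>\<iota>\<in>K. sc [:if \<iota> = \<kappa> then 1 else 0:] (rep \<iota>)) = (\<Sum>\<iota>\<in>K. if \<iota> = \<kappa> then rep \<iota> else 0)"
  proof (rule sum.cong)
    fix x assume "x \<in> K"
    show "sc [:if x = \<kappa> then 1 else 0:] (rep x) = (if x = \<kappa> then rep x else 0)"
      by (cases "x = \<kappa>") (simp_all only: if_True if_False sc_c1 sc_c0 simp_thms)
  qed (rule refl)
  also have "\<dots> = rep \<kappa>" using assms(1,2) by simp
  finally show "sc [:1:] (rep \<kappa>) = (\<Sum>\<iota>\<in>K. sc [:if \<iota> = \<kappa> then 1 else 0:] (rep \<iota>))"
    by (simp only: sc_c1)
qed (use assms in auto)

lemma span_mono:
  assumes "SpanK d K X" "K \<subseteq> K'" "finite K'" "d \<le> d'" "even (d' - d)"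
  shows "SpanK d' K' X"
proof -
  obtain H P where 1: "\<forall>m::real. m \<noteq> 0 \<longrightarrow> poly H m \<noteq> 0"
    "\<forall>\<kappa>\<in>K. P \<kappa> \<noteq> 0 \<longrightarrow> dd \<kappa> \<le> d \<and> even (d - dd \<kappa>)"
    "sc [:H:] X = (\<Sum>\<kappa>\<in>K. sc [:P \<kappa>:] (rep \<kappa>))"
    using assms(1) unfolding SpanK_def by blast
  define P' where "P' \<kappa> = (if \<kappa> \<in> K then P \<kappa> else 0)" for \<kappa>
  have "(\<Sum>\<kappa>\<in>K'. sc [:P' \<kappa>:] (rep \<kappa>)) = (\<Sum>\<kappa>\<in>K. sc [:P' \<kappa>:] (rep \<kappa>))"
  proof (rule sum.mono_neutral_right)
    show "\<forall>i\<in>K' - K. sc [:P' i:] (rep i) = 0" by (simp add: P'_def sc_c0)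
  qed (use assms(2,3) in auto)
  also have "\<dots> = (\<Sum>\<kappa>\<in>K. sc [:P \<kappa>:] (rep \<kappa>))"
    by (rule sum.cong) (simp_all add: P'_def)
  finally have eq: "sc [:H:] X = (\<Sum>\<kappa>\<in>K'. sc [:P' \<kappa>:] (rep \<kappa>))" using 1(3) by simp
  have cond: "\<forall>\<kappa>\<in>K'. P' \<kappa> \<noteq> 0 \<longrightarrow> dd \<kappa> \<le> d' \<and> even (d' - dd \<kappa>)"
  proof (intro ballI impI)
    fix \<kappa> assume "\<kappa> \<in> K'" "P' \<kappa> \<noteq> 0"
    then have "\<kappa> \<in> K" "P \<kappa> \<noteq> 0" by (auto simp: P'_def split: if_splits)
    then have a: "dd \<kappa> \<le> d" "even (d - dd \<kappa>)" using 1(2) by auto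
    have "d' - dd \<kappa> = (d' - d) + (d - dd \<kappa>)" using a(1) assms(4) by arith
    then show "dd \<kappa> \<le> d' \<and> even (d' - dd \<kappa>)" using a assms(4,5) by simp
  qed
  show ?thesis unfolding SpanK_def
    by (rule exI[of _ H], rule exI[of _ P']) (use 1(1) eq cond in blast)
qed


lemma rep_simp: "rep (a1, a2, a3) = (Tth ^^ a1) (TvIt 0 a2 ((Tm ^^ a3) f0))"
  by (simp add: rep_def)

lemma rep_Tth: "Tth (rep (a1, a2, a3)) = rep (Suc a1, a2, a3)"
  by (simp add: rep_simp)
lemma rep_Tv: "Tv (2 * a2) (rep (0, a2, a3)) = rep (0, Suc a2, a3)"
  by (simp add: rep_simp)
lemma rep_Tm: "Tm (rep (0, 0, j)) = rep (0, 0, Suc j)"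
  by (simp add: rep_simp)

lemma Tth_TvIt: "Tth (TvIt d q X) = TvIt (Suc d) q (Tth X)"
  by (induction q) (simp_all add: C3g)
lemma Tth_Tm_iter: "Tth ((Tm ^^ k) X) = (Tm ^^ k) (Tth X)"
  by (induction k) (simp_all add: C1g'[symmetric])

lemma Tm_sc_c: "Tm (sc [:p:] X) = sc [:pderiv p:] X + sc [:p:] (Tm X)"
  by (simp add: Tm_sc)

lemma CM:
  assumes "SpanK d (Kset (a1, a2, a3) \<inter> GT) X"
  shows "SpanK d (Kset (a1, a2, Suc a3) \<inter> GT) (Tm X)"
proof -
  let ?K = "Kset (a1, a2, a3) \<inter> GT"
  let ?K' = "Kset (a1, a2, Suc a3) \<inter> GT"
  obtain H P where 1: "\<forall>m::real. m \<noteq> 0 \<longrightarrow> poly H m \<noteq> 0"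
    "\<forall>\<kappa>\<in>?K. P \<kappa> \<noteq> 0 \<longrightarrow> dd \<kappa> \<le> d \<and> even (d - dd \<kappa>)"
    "sc [:H:] X = (\<Sum>\<kappa>\<in>?K. sc [:P \<kappa>:] (rep \<kappa>))"
    using assms(1) unfolding SpanK_def by blast
  have fin: "finite ?K'" by simp
  have sub: "?K \<subseteq> ?K'" by (auto simp: GT_def)
  have T: "SpanK d ?K' (sc [:pderiv (P \<kappa>):] (rep \<kappa>) + sc [:P \<kappa>:] (Tm (rep \<kappa>)))"
    if k: "\<kappa> \<in> ?K" for \<kappa>
  proof (cases "P \<kappa> = 0")
    case True
    then show ?thesis by (simp add: sc_c0 span_zero)
  next
    case False
    then have c: "dd \<kappa> \<le> d" "even (d - dd \<kappa>)" using 1(2) k by auto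
    obtain j where kj: "\<kappa> = (0, 0, j)" using k by (auto simp: GT_def)
    have "(0, 0, Suc j) \<in> ?K'" using k kj by (auto simp: GT_def)
    then have "SpanK d ?K' (rep (0, 0, Suc j))"
      using c kj by (intro span_single) auto
    moreover have "SpanK d ?K' (rep \<kappa>)"
      using c k sub by (intro span_single) auto
    ultimately show ?thesis
      by (auto simp: kj rep_Tm intro!: span_add span_sc)
  qed
  have R: "SpanK d ?K' (sc [:P \<kappa>:] (rep \<kappa>))" if k: "\<kappa> \<in> ?K" for \<kappa>
  proof (cases "P \<kappa> = 0")
    case True
    then show ?thesis by (simp add: sc_c0 span_zero)
  next
    case False
    then have c: "dd \<kappa> \<le> d" "even (d - dd \<kappa>)" using 1(2) k by auto
    then show ?thesis using k sub by (intro span_sc span_single) auto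
  qed
  have "Tm (sc [:H:] X) = sc [:pderiv H:] X + sc [:H:] (Tm X)" by (rule Tm_sc_c)
  then have "sc [:H:] (Tm X) = Tm (sc [:H:] X) - sc [:pderiv H:] X" by (simp add: algebra_simps)
  then have "sc [:H:] (sc [:H:] (Tm X)) = sc [:H:] (Tm (sc [:H:] X)) - sc [:pderiv H:] (sc [:H:] X)"
    by (simp add: sc_diff sc_sc_c mult.commute)
  also have "\<dots> = sc [:H:] (\<Sum>\<kappa>\<in>?K. sc [:pderiv (P \<kappa>):] (rep \<kappa>) + sc [:P \<kappa>:] (Tm (rep \<kappa>)))
      - sc [:pderiv H:] (\<Sum>\<kappa>\<in>?K. sc [:P \<kappa>:] (rep \<kappa>))"
    by (simp only: 1(3) Tm_sum Tm_sc_c)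
  finally have eq: "sc [:H:] (sc [:H:] (Tm X)) = \<dots>" .
  have "SpanK d ?K' (sc [:H:] (sc [:H:] (Tm X)))"
    unfolding eq
    by (intro span_diff span_sc span_sum T R) auto
  then show ?thesis
    by (rule span_div[OF span_div]) (use 1(1) in auto)
qed


lemma c2Mp: "2 * Mp = [:[:0, 2:]:]" by (simp add: Mp_def numeral_poly)
lemma cm2Mp: "-2 * Mp = [:[:0, -2:]:]" by (simp add: Mp_def numeral_poly)
lemma c1Mp2: "-(1 + Mp^2) = [:[:-1, 0, -1:]:]" by (simp add: Mp_def power2_eq_square one_pCons)
lemma c2: "(2::pp) = [:[:2:]:]" by (simp add: numeral_poly)
lemma cMp3: "Mp * (1 + Mp^2) = [:[:0, 1, 0, 1:]:]" by (simp add: Mp_def power2_eq_square one_pCons)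
lemma chalf: "- of_nat e * cp (1/2) = [:[: - real e / 2:]:]"
  by (simp add: cp_def of_nat_poly)

lemma R3: "1 \<le> k \<Longrightarrow> SpanK 2 (Kset (0, 1, k) \<inter> GT) (rep (0, 1, k))"
proof (induction k)
  case 0
  then show ?case by simp
next
  case (Suc k)
  show ?case
  proof (cases "k = 0")
    case True
    have eq: "sc [:[:0, 2:]:] (rep (0, 1, 1)) = sc [:[:0, -2:]:] (rep (0, 0, 1)) + sc [:[:-1, 0, -1:]:] (rep (0, 0, 2))"
      using R3base unfolding c2Mp cm2Mp c1Mp2 by (simp add: rep_simp numeral_2_eq_2)
    have "SpanK 2 (Kset (0, 1, 1) \<inter> GT) (sc [:[:0, 2:]:] (rep (0, 1, 1)))"
      unfolding eq by (intro span_add span_sc span_single) (auto simp: GT_def)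
    then have "SpanK 2 (Kset (0, 1, 1) \<inter> GT) (rep (0, 1, 1))"
      by (rule span_div) simp
    then show ?thesis using True by simp
  next
    case False
    then have "SpanK 2 (Kset (0, 1, k) \<inter> GT) (rep (0, 1, k))" using Suc by simp
    then have "SpanK 2 (Kset (0, 1, Suc k) \<inter> GT) (Tm (rep (0, 1, k)))" by (rule CM)
    moreover have "Tm (rep (0, 1, k)) = rep (0, 1, Suc k)"
      by (simp add: rep_simp C2g)
    ultimately show ?thesis by simp
  qed
qed

lemma CV:
  assumes "SpanK (dd (a1, a2, a3)) (Kset (a1, a2, a3)) X" "even (dd (a1, a2, a3))"
  shows "SpanK (dd (a1, a2, a3) + 2) (Kset (a1, Suc a2, a3)) (Tv (dd (a1, a2, a3)) X)"
proof -
  let ?d = "dd (a1, a2, a3)"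
  let ?K = "Kset (a1, a2, a3)"
  let ?K' = "Kset (a1, Suc a2, a3)"
  obtain H P where 1: "\<forall>m::real. m \<noteq> 0 \<longrightarrow> poly H m \<noteq> 0"
    "\<forall>\<kappa>\<in>?K. P \<kappa> \<noteq> 0 \<longrightarrow> dd \<kappa> \<le> ?d \<and> even (?d - dd \<kappa>)"
    "sc [:H:] X = (\<Sum>\<kappa>\<in>?K. sc [:P \<kappa>:] (rep \<kappa>))"
    using assms(1) unfolding SpanK_def by blast
  have fin: "finite ?K'" by simp
  have sub: "?K \<subseteq> ?K'" by auto
  have T: "SpanK (?d + 2) ?K' (sc [:P \<kappa>:] (Tv ?d (rep \<kappa>)))" if k: "\<kappa> \<in> ?K" for \<kappa>
  proof (cases "P \<kappa> = 0")
    case True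
    then show ?thesis by (simp add: sc_c0 span_zero)
  next
    case False
    then have c: "dd \<kappa> \<le> ?d" "even (?d - dd \<kappa>)" using 1(2) k by auto
    obtain k1 k2 k3 where kk: "\<kappa> = (k1, k2, k3)" by (metis surj_pair)
    have k10: "k1 = 0" using c assms(2) k kk by auto
    have s1: "SpanK (?d + 2) ?K' (rep \<kappa>)"
      using c k sub by (intro span_single) auto
    have s2: "SpanK (?d + 2) ?K' (Tv (dd \<kappa>) (rep \<kappa>))"
    proof (cases "k3 = 0")
      case True
      have "Tv (dd \<kappa>) (rep \<kappa>) = rep (0, Suc k2, 0)"
        using kk k10 True rep_Tv[of k2 0] by simp
      moreover have "SpanK (?d + 2) ?K' (rep (0, Suc k2, 0))"
        using k kk k10 True c by (intro span_single) auto
      ultimately show ?thesis by simp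
    next
      case False
      then have k20: "k2 = 0" "1 \<le> k3" using k kk by auto
      have "Tv (dd \<kappa>) (rep \<kappa>) = rep (0, 1, k3)"
        using kk k10 k20 rep_Tv[of 0 k3] by simp
      moreover have "SpanK (?d + 2) ?K' (rep (0, 1, k3))"
      proof (rule span_mono[OF R3[OF k20(2)]])
        show "Kset (0, 1, k3) \<inter> GT \<subseteq> ?K'"
          using k kk k10 k20 by (auto simp: GT_def)
      qed (use assms(2) in auto)
      ultimately show ?thesis by simp
    qed
    have "Tv ?d (rep \<kappa>) = Tv (dd \<kappa> + (?d - dd \<kappa>)) (rep \<kappa>)" using c by simp
    also have "\<dots> = Tv (dd \<kappa>) (rep \<kappa>) + sc [:[: - real (?d - dd \<kappa>) / 2:]:] (rep \<kappa>)"
      by (simp only: Tv_shift chalf)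
    finally show ?thesis using s1 s2 by (simp add: span_sc span_add)
  qed
  have "sc [:H:] (Tv ?d X) = Tv ?d (sc [:H:] X)" by (simp add: Tv_sc)
  also have "\<dots> = (\<Sum>\<kappa>\<in>?K. sc [:P \<kappa>:] (Tv ?d (rep \<kappa>)))"
    by (simp add: 1(3) Tv_sum Tv_sc)
  finally have eq: "sc [:H:] (Tv ?d X) = \<dots>" .
  have "SpanK (?d + 2) ?K' (sc [:H:] (Tv ?d X))"
    unfolding eq by (intro span_sum T) auto
  then show ?thesis by (rule span_div) (use 1(1) in auto)
qed


definition Y0 :: "pp \<times> pp" where "Y0 = Tth (Tth f0)"

lemma Tm_diff: "Tm (X - Y) = Tm X - Tm Y" by (simp add: Tm_def algebra_simps)

lemma Y0_eq: "Y0 = sc [:[:2:]:] (rep (0, 1, 0)) - sc [:[:0, 1, 0, 1:]:] (rep (0, 0, 1))"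
proof -
  have "Y0 = sc 2 (Tv 0 f0) - sc (Mp * (1 + Mp^2)) (Tm f0)" unfolding Y0_def by (rule PDE)
  also have "\<dots> = sc [:[:2:]:] (rep (0, 1, 0)) - sc [:[:0, 1, 0, 1:]:] (rep (0, 0, 1))"
    unfolding c2 cMp3 by (simp add: rep_simp sc_def)
  finally show ?thesis .
qed

lemma span_Y0: "SpanK 2 (Kset (2, 0, 0)) Y0"
  unfolding Y0_eq by (intro span_diff span_sc span_single) auto

lemma R1: "SpanK (2 + 2 * q) (Kset (2, q, 0)) (rep (2, q, 0))"
proof -
  have e: "rep (2, q, 0) = TvIt 2 q Y0"
    by (simp add: rep_simp Y0_def Tth_TvIt numeral_2_eq_2)
  have "SpanK (2 + 2 * q) (Kset (2, q, 0)) (TvIt 2 q Y0)"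
  proof (induction q)
    case 0
    then show ?case using span_Y0 by simp
  next
    case (Suc q)
    have "SpanK (dd (2, q, 0) + 2) (Kset (2, Suc q, 0)) (Tv (dd (2, q, 0)) (TvIt 2 q Y0))"
      by (rule CV) (use Suc in auto)
    then show ?case by (simp add: algebra_simps)
  qed
  then show ?thesis using e by simp
qed

lemma R2: "1 \<le> k \<Longrightarrow> SpanK 2 (Kset (2, 0, k)) (rep (2, 0, k))"
proof -
  assume k: "1 \<le> k"
  have e: "rep (2, 0, k) = (Tm ^^ k) Y0"
    by (simp add: rep_simp Y0_def Tth_Tm_iter numeral_2_eq_2)
  have base: "SpanK 2 (Kset (2, 0, 1) \<inter> GT) (Tm Y0)"
  proof -
    have "Tm Y0 = sc [:[:2:]:] (rep (0, 1, 1)) - (sc [:[:1, 0, 3:]:] (rep (0, 0, 1)) + sc [:[:0, 1, 0, 1:]:] (rep (0, 0, 2)))"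
    proof -
      have "Tm Y0 = sc [:pderiv [:2:]:] (rep (0, 1, 0)) + sc [:[:2:]:] (Tm (rep (0, 1, 0)))
          - (sc [:pderiv [:0, 1, 0, 1:]:] (rep (0, 0, 1)) + sc [:[:0, 1, 0, 1:]:] (Tm (rep (0, 0, 1))))"
        unfolding Y0_eq by (simp only: Tm_add Tm_diff Tm_sc_c)
      moreover have "Tm (rep (0, 1, 0)) = rep (0, 1, 1)" by (simp add: rep_simp C2g)
      moreover have "pderiv [:0, 1, 0, 1::real:] = [:1, 0, 3:]"
        by (simp add: pderiv_pCons)
      ultimately show ?thesis by (simp add: rep_Tm[of 1, simplified] sc_c0 numeral_2_eq_2)
    qed
    moreover have s1: "SpanK 2 (Kset (2, 0, 1) \<inter> GT) (rep (0, 1, 1))"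
      by (rule span_mono[OF R3]) (auto simp: GT_def)
    moreover have "SpanK 2 (Kset (2, 0, 1) \<inter> GT) (rep (0, 0, 1))"
      by (rule span_single) (auto simp: GT_def)
    moreover have "SpanK 2 (Kset (2, 0, 1) \<inter> GT) (rep (0, 0, 2))"
      by (rule span_single) (auto simp: GT_def)
    ultimately show ?thesis
      by (simp only:) (intro span_add span_diff span_sc)
  qed
  have "SpanK 2 (Kset (2, 0, Suc j) \<inter> GT) ((Tm ^^ Suc j) Y0)" for j
  proof (induction j)
    case 0
    then show ?case using base by simp
  next
    case (Suc j)
    then show ?case using CM[of 2 2 0 "Suc j"] by simp
  qed
  from this[of "k - 1"] have "SpanK 2 (Kset (2, 0, k) \<inter> GT) ((Tm ^^ k) Y0)" using k by simp
  then show ?thesis using e by (auto elim!: span_mono)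
qed

lemma CT:
  assumes "SpanK (dd (a1, a2, a3)) (Kset (a1, a2, a3)) X"
  shows "SpanK (dd (a1, a2, a3) + 1) (Kset (Suc a1, a2, a3)) (Tth X)"
proof -
  let ?d = "dd (a1, a2, a3)"
  let ?K = "Kset (a1, a2, a3)"
  let ?K' = "Kset (Suc a1, a2, a3)"
  obtain H P where 1: "\<forall>m::real. m \<noteq> 0 \<longrightarrow> poly H m \<noteq> 0"
    "\<forall>\<kappa>\<in>?K. P \<kappa> \<noteq> 0 \<longrightarrow> dd \<kappa> \<le> ?d \<and> even (?d - dd \<kappa>)"
    "sc [:H:] X = (\<Sum>\<kappa>\<in>?K. sc [:P \<kappa>:] (rep \<kappa>))"
    using assms(1) unfolding SpanK_def by blast
  have T: "SpanK (?d + 1) ?K' (sc [:P \<kappa>:] (Tth (rep \<kappa>)))" if k: "\<kappa> \<in> ?K" for \<kappa>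
  proof (cases "P \<kappa> = 0")
    case True
    then show ?thesis by (simp add: sc_c0 span_zero)
  next
    case False
    then have c: "dd \<kappa> \<le> ?d" "even (?d - dd \<kappa>)" using 1(2) k by auto
    obtain k1 k2 k3 where kk: "\<kappa> = (k1, k2, k3)" by (metis surj_pair)
    have "SpanK (?d + 1) ?K' (Tth (rep \<kappa>))"
    proof (cases "k1 = 0")
      case True
      have "SpanK (?d + 1) ?K' (rep (Suc k1, k2, k3))"
      proof (rule span_single)
        show "dd (Suc k1, k2, k3) \<le> ?d + 1" using c kk by simp
        show "even (?d + 1 - dd (Suc k1, k2, k3))" using c kk by simp
      qed (use k kk True in auto)
      then show ?thesis using kk rep_Tth by simp
    next
      case False
      then have k11: "k1 = 1" using k kk by auto
      show ?thesis
      proof (cases "k3 = 0")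
        case True
        have "SpanK (?d + 1) ?K' (rep (2, k2, 0))"
        proof (rule span_mono[OF R1])
          show "Kset (2, k2, 0) \<subseteq> ?K'"
          proof
            fix \<iota> assume "\<iota> \<in> Kset (2, k2, 0)"
            then show "\<iota> \<in> ?K'" using k kk k11 True
              by (cases \<iota>) auto
          qed
          show "2 + 2 * k2 \<le> ?d + 1" using c kk k11 by simp
          show "even (?d + 1 - (2 + 2 * k2))" using c kk k11 by simp
        qed simp
        then show ?thesis using kk k11 True rep_Tth[of 1 k2 0] by (simp add: numeral_2_eq_2)
      next
        case False
        then have k20: "k2 = 0" "1 \<le> k3" using k kk by auto
        have "SpanK (?d + 1) ?K' (rep (2, 0, k3))"
        proof (rule span_mono[OF R2[OF k20(2)]])
          show "Kset (2, 0, k3) \<subseteq> ?K'"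
          proof
            fix \<iota> assume "\<iota> \<in> Kset (2, 0, k3)"
            then show "\<iota> \<in> ?K'" using k kk k11 k20
              by (cases \<iota>) auto
          qed
          show "2 \<le> ?d + 1" using c kk k11 by simp
          show "even (?d + 1 - 2)" using c kk k11 k20 by simp
        qed simp
        then show ?thesis using kk k11 k20 rep_Tth[of 1 0 k3] by (simp add: numeral_2_eq_2)
      qed
    qed
    then show ?thesis by (rule span_sc)
  qed
  have "sc [:H:] (Tth X) = Tth (sc [:H:] X)" by (simp add: Tth_sc)
  also have "\<dots> = (\<Sum>\<kappa>\<in>?K. sc [:P \<kappa>:] (Tth (rep \<kappa>)))"
    by (simp add: 1(3) Tth_sum Tth_sc)
  finally have eq: "sc [:H:] (Tth X) = \<dots>" .
  have "SpanK (?d + 1) ?K' (sc [:H:] (Tth X))"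
    unfolding eq by (intro span_sum T) auto
  then show ?thesis by (rule span_div) (use 1(1) in auto)
qed

lemma main_v: "SpanK (2 * q) (Kset (0, q, k)) (rep (0, q, k))"
proof (induction q)
  case 0
  show ?case by (rule span_single) auto
next
  case (Suc q)
  have "SpanK (dd (0, q, k) + 2) (Kset (0, Suc q, k)) (Tv (dd (0, q, k)) (rep (0, q, k)))"
    by (rule CV) (use Suc in auto)
  then show ?case using rep_Tv[of q k] by simp
qed

lemma main_span: "SpanK (dd \<alpha>) (Kset \<alpha>) (rep \<alpha>)"
proof -
  obtain a1 a2 a3 where a: "\<alpha> = (a1, a2, a3)" by (metis surj_pair)
  have "SpanK (dd (a1, a2, a3)) (Kset (a1, a2, a3)) (rep (a1, a2, a3))"
  proof (induction a1)
    case 0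
    then show ?case using main_v by simp
  next
    case (Suc a1)
    from CT[OF this] show ?case by (simp add: rep_Tth)
  qed
  then show ?thesis using a by simp
qed


definition ev :: "pp \<Rightarrow> real \<Rightarrow> real \<Rightarrow> real" where "ev A z m = poly (poly A [:z:]) m"

lemma ev_add[simp]: "ev (A + B) z m = ev A z m + ev B z m" by (simp add: ev_def)
lemma ev_diff[simp]: "ev (A - B) z m = ev A z m - ev B z m" by (simp add: ev_def)
lemma ev_mult[simp]: "ev (A * B) z m = ev A z m * ev B z m" by (simp add: ev_def)
lemma ev_uminus[simp]: "ev (- A) z m = - ev A z m" by (simp add: ev_def)
lemma ev_0[simp]: "ev 0 z m = 0" by (simp add: ev_def)
lemma ev_1[simp]: "ev 1 z m = 1" by (simp add: ev_def)
lemma ev_power[simp]: "ev (A ^ n) z m = ev A z m ^ n" by (induction n) auto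
lemma ev_Zp[simp]: "ev Zp z m = z" by (simp add: ev_def Zp_def)
lemma ev_Mp[simp]: "ev Mp z m = m" by (simp add: ev_def Mp_def)
lemma ev_cp[simp]: "ev (cp r) z m = r" by (simp add: ev_def cp_def)
lemma ev_const[simp]: "ev [:p:] z m = poly p m" by (simp add: ev_def)
lemma ev_of_nat[simp]: "ev (of_nat n) z m = of_nat n" by (induction n) auto
lemma ev_pCons: "ev (pCons a A) z m = poly a m + z * ev A z m" by (simp add: ev_def)

lemma pm_pCons: "pm (pCons a A) = pCons (pderiv a) (pm A)"
  by (rule poly_eqI) (simp add: coeff_pm coeff_pCons split: nat.split)

lemma DM: "(f has_field_derivative D) (at x) \<Longrightarrow> (g has_field_derivative E) (at x) \<Longrightarrow>
    ((\<lambda>x. f x * g x) has_field_derivative D * g x + f x * E) (at x)"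
  using DERIV_mult'[of f D x UNIV g E] by (simp add: add.commute)

lemma ev_dz: "((\<lambda>z. ev A z m) has_real_derivative ev (pderiv A) z m) (at z)"
proof (induction A arbitrary: z rule: pCons_induct)
  case 0
  then show ?case by simp
next
  case (pCons a A)
  have "((\<lambda>z. poly a m + z * ev A z m) has_real_derivative 0 + (1 * ev A z m + z * ev (pderiv A) z m)) (at z)"
    by (rule DERIV_add[OF DERIV_const DM[OF DERIV_ident pCons.IH]])
  then show ?case by (simp add: ev_pCons pderiv_pCons)
qed

lemma ev_dm: "((\<lambda>m. ev A z m) has_real_derivative ev (pm A) z m) (at m)"
proof (induction A arbitrary: m rule: pCons_induct)
  case 0
  then show ?case by simp
next
  case (pCons a A)
  have "((\<lambda>m. poly a m + z * ev A z m) has_real_derivative poly (pderiv a) m + (0 * ev A z m + z * ev (pm A) z m)) (at m)"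
    by (rule DERIV_add[OF poly_DERIV DM[OF DERIV_const pCons.IH]])
  then show ?case by (simp add: ev_pCons pm_pCons)
qed

definition W :: "pp \<times> pp \<Rightarrow> real \<Rightarrow> real \<Rightarrow> real" where
  "W X z m = ev (fst X) z m * exp (-(z^2)/2) * Phi (m*z) + ev (snd X) z m * exp (-((1+m^2)*z^2)/2)"

lemma W_add[simp]: "W (X + Y) z m = W X z m + W Y z m" by (simp add: W_def algebra_simps)
lemma W_uminus[simp]: "W (- X) z m = - W X z m" by (simp add: W_def algebra_simps)
lemma W_diff[simp]: "W (X - Y) z m = W X z m - W Y z m" by (simp add: W_def algebra_simps)
lemma W_sc[simp]: "W (sc K X) z m = ev K z m * W X z m" by (simp add: W_def sc_def algebra_simps)
lemma W_zero[simp]: "W 0 z m = 0" by (simp add: W_def)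
lemma W_sum: "W (sum f S) z m = (\<Sum>i\<in>S. W (f i) z m)"
  by (induction S rule: infinite_finite_induct) auto

lemma exp_comb: "exp (-(z^2)/2) * std_normal_density (m*z) = cc * exp (-((1+m^2)*z^2)/2)"
proof -
  have "exp (-(z^2)/2) * exp (-((m*z)^2)/2) = exp (-((1+m^2)*z^2)/2)"
    by (simp add: exp_add[symmetric] algebra_simps power_mult_distrib)
  then show ?thesis by (simp add: std_normal_density_def cc_def algebra_simps)
qed

lemma d_e1: "((\<lambda>z. exp (-(z^2)/2)) has_real_derivative exp (-(z^2)/2) * (-z)) (at z)"
  by (auto intro!: derivative_eq_intros)
lemma d_e2: "((\<lambda>z. exp (-((1+m^2)*z^2)/2)) has_real_derivative exp (-((1+m^2)*z^2)/2) * (-((1+m^2)*z))) (at z)"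
  by (auto intro!: derivative_eq_intros)
lemma d_e2m: "((\<lambda>m. exp (-((1+m^2)*z^2)/2)) has_real_derivative exp (-((1+m^2)*z^2)/2) * (-(m*z^2))) (at m)"
  by (auto intro!: derivative_eq_intros)
lemma d_Phiz: "((\<lambda>z. Phi (m*z)) has_real_derivative std_normal_density (m*z) * m) (at z)"
  by (rule DERIV_chain2[OF DERIV_Phi]) (auto intro!: derivative_eq_intros)
lemma d_Phim: "((\<lambda>m. Phi (m*z)) has_real_derivative std_normal_density (m*z) * z) (at m)"
  by (rule DERIV_chain2[OF DERIV_Phi]) (auto intro!: derivative_eq_intros)

lemma W_dz: "((\<lambda>z. W X z m) has_real_derivative W (Dz X) z m) (at z)"
proof -
  obtain A B where X: "X = (A, B)" by (metis surj_pair)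
  let ?e1 = "exp (-(z^2)/2)" and ?e2 = "exp (-((1+m^2)*z^2)/2)"
  have "((\<lambda>z. ev A z m * exp (-(z^2)/2) * Phi (m*z) + ev B z m * exp (-((1+m^2)*z^2)/2)) has_real_derivative
      (ev (pderiv A) z m * ?e1 + ev A z m * (?e1 * (-z))) * Phi (m*z) + ev A z m * ?e1 * (std_normal_density (m*z) * m)
      + (ev (pderiv B) z m * ?e2 + ev B z m * (?e2 * (-((1+m^2)*z))))) (at z)"
    by (rule DERIV_add[OF DM[OF DM[OF ev_dz d_e1] d_Phiz] DM[OF ev_dz d_e2]])
  moreover have "W (Dz X) z m = (ev (pderiv A) z m * ?e1 + ev A z m * (?e1 * (-z))) * Phi (m*z) + ev A z m * ?e1 * (std_normal_density (m*z) * m)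
      + (ev (pderiv B) z m * ?e2 + ev B z m * (?e2 * (-((1+m^2)*z))))"
  proof -
    have "ev A z m * ?e1 * (std_normal_density (m*z) * m) = ev A z m * m * (?e1 * std_normal_density (m*z))"
      by (simp only: ac_simps)
    also have "\<dots> = ev A z m * m * (cc * ?e2)" by (simp only: exp_comb)
    finally have eqc: "ev A z m * ?e1 * (std_normal_density (m*z) * m) = ev A z m * m * (cc * ?e2)" .
    show ?thesis unfolding eqc by (simp add: X W_def Dz_def algebra_simps)
  qed
  ultimately show ?thesis by (simp add: X W_def)
qed

lemma W_dm: "((\<lambda>m. W X z m) has_real_derivative W (Tm X) z m) (at m)"
proof -
  obtain A B where X: "X = (A, B)" by (metis surj_pair)
  let ?e1 = "exp (-(z^2)/2)" and ?e2 = "exp (-((1+m^2)*z^2)/2)"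
  have "((\<lambda>m. ev A z m * exp (-(z^2)/2) * Phi (m*z) + ev B z m * exp (-((1+m^2)*z^2)/2)) has_real_derivative
      (ev (pm A) z m * ?e1 + ev A z m * 0) * Phi (m*z) + ev A z m * ?e1 * (std_normal_density (m*z) * z)
      + (ev (pm B) z m * ?e2 + ev B z m * (?e2 * (-(m*z^2))))) (at m)"
    by (rule DERIV_add[OF DM[OF DM[OF ev_dm DERIV_const] d_Phim] DM[OF ev_dm d_e2m]])
  moreover have "W (Tm X) z m = (ev (pm A) z m * ?e1 + ev A z m * 0) * Phi (m*z) + ev A z m * ?e1 * (std_normal_density (m*z) * z)
      + (ev (pm B) z m * ?e2 + ev B z m * (?e2 * (-(m*z^2))))"
  proof -
    have "ev A z m * ?e1 * (std_normal_density (m*z) * z) = ev A z m * z * (?e1 * std_normal_density (m*z))"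
      by (simp only: ac_simps)
    also have "\<dots> = ev A z m * z * (cc * ?e2)" by (simp only: exp_comb)
    finally have eqc: "ev A z m * ?e1 * (std_normal_density (m*z) * z) = ev A z m * z * (cc * ?e2)" .
    show ?thesis unfolding eqc by (simp add: X W_def Tm_def algebra_simps power2_eq_square)
  qed
  ultimately show ?thesis by (simp add: X W_def)
qed


definition Val :: "nat \<Rightarrow> pp \<times> pp \<Rightarrow> real \<Rightarrow> real \<Rightarrow> real \<Rightarrow> real \<Rightarrow> real" where
  "Val d X x \<theta> v m = v powr (-(real d + 1)/2) * W X ((x - \<theta>) / sqrt v) m"

lemma powr_half_step: "0 < v \<Longrightarrow> v powr (a - 1/2) = v powr a / sqrt v"
  by (simp add: powr_diff powr_half_sqrt)

lemma Val_dth: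
  assumes v: "0 < v"
  shows "((\<lambda>t. Val d X x t v m) has_real_derivative Val (Suc d) (Tth X) x \<theta> v m) (at \<theta>)"
proof -
  have g0: "((\<lambda>t. x - t) has_real_derivative 0 - 1) (at \<theta>)"
    by (intro derivative_intros)
  have g: "((\<lambda>t. (x - t) / sqrt v) has_real_derivative - (1 / sqrt v)) (at \<theta>)"
    using DERIV_cdivide[OF g0, of "sqrt v"] by simp
  have "((\<lambda>t. W X ((x - t) / sqrt v) m) has_real_derivative W (Dz X) ((x - \<theta>) / sqrt v) m * - (1 / sqrt v)) (at \<theta>)"
    by (rule DERIV_chain2[OF W_dz g])
  then have "((\<lambda>t. v powr (-(real d + 1)/2) * W X ((x - t) / sqrt v) m) has_real_derivative
      v powr (-(real d + 1)/2) * (W (Dz X) ((x - \<theta>) / sqrt v) m * - (1 / sqrt v))) (at \<theta>)"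
    by (rule DERIV_cmult)
  moreover have "v powr (-(real d + 1)/2) * (W (Dz X) ((x - \<theta>) / sqrt v) m * - (1 / sqrt v)) = Val (Suc d) (Tth X) x \<theta> v m"
  proof -
    have "v powr (-(real (Suc d) + 1)/2) = v powr (-(real d + 1)/2 - 1/2)"
      by (rule arg_cong[where f="\<lambda>a. v powr a"]) (simp add: field_simps)
    also have "\<dots> = v powr (-(real d + 1)/2) / sqrt v" by (rule powr_half_step[OF v])
    finally have "v powr (-(real (Suc d) + 1)/2) = v powr (-(real d + 1)/2) / sqrt v" .
    then show ?thesis by (simp add: Val_def Tth_def)
  qed
  ultimately show ?thesis unfolding Val_def by simp
qed

lemma Val_dm:
  "((\<lambda>t. Val d X x \<theta> v t) has_real_derivative Val d (Tm X) x \<theta> v m) (at m)"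
  unfolding Val_def by (rule DERIV_cmult[OF W_dm])

lemma g1: fixes v c :: real assumes v: "0 < v"
  shows "((\<lambda>t. c / sqrt t) has_real_derivative (0 * sqrt v - c * (inverse (sqrt v) / 2)) / (sqrt v * sqrt v)) (at v)"
proof -
    have sv: "sqrt v \<noteq> 0" using v by simp
    show ?thesis
      by (rule DERIV_divide[OF DERIV_const DERIV_real_sqrt[OF v] sv])
qed
lemma g2: fixes v c :: real assumes v: "0 < v"
  shows "(0 * sqrt v - c * (inverse (sqrt v) / 2)) / (sqrt v * sqrt v) = - (c / sqrt v) / (2 * v)"
proof -
  have ss: "sqrt v * sqrt v = v" using v by simp
  have "(0 * sqrt v - c * (inverse (sqrt v) / 2)) / (sqrt v * sqrt v) = - (c * inverse (sqrt v) / 2) / v"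
    by (simp only: ss) simp
  also have "\<dots> = - (c / sqrt v) / (2 * v)"
    by (simp only: divide_inverse inverse_mult_distrib mult_minus_left mult_minus_right ac_simps)
  finally show ?thesis .
qed
lemma g3: fixes v c :: real assumes v: "0 < v"
  shows "((\<lambda>t. c / sqrt t) has_real_derivative - (c / sqrt v) / (2 * v)) (at v)"
  using g1[OF v, of c] g2[OF v, of c] by simp
lemma Val_dv:
  assumes v: "0 < v"
  shows "((\<lambda>t. Val d X x \<theta> t m) has_real_derivative Val (d + 2) (Tv d X) x \<theta> v m) (at v)"
proof -
  define c where "c = x - \<theta>"
  define e where "e = -(real d + 1)/2"
  define z where "z = c / sqrt v"
  have g: "((\<lambda>t. c / sqrt t) has_real_derivative - z / (2 * v)) (at v)"
    unfolding z_def by (rule g3[OF v])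
  have w: "((\<lambda>t. W X (c / sqrt t) m) has_real_derivative W (Dz X) z m * (- z / (2 * v))) (at v)"
    unfolding z_def by (rule DERIV_chain2[OF W_dz g[unfolded z_def]])
  have p: "((\<lambda>t. t powr e) has_real_derivative e * v powr (e - 1)) (at v)"
    by (rule has_real_derivative_powr[OF v])
  have D: "((\<lambda>t. t powr e * W X (c / sqrt t) m) has_real_derivative
      e * v powr (e - 1) * W X z m + v powr e * (W (Dz X) z m * (- z / (2 * v)))) (at v)"
    using DM[OF p w, unfolded z_def[symmetric]] .
  have pe: "v powr (e - 1) = v powr e / v" using v by (simp add: powr_diff)
  have WT: "W (Tv d X) z m = e * W X z m - z / 2 * W (Dz X) z m"
    by (simp add: Tv_def e_def algebra_simps)
  have ex: "-(real (d + 2) + 1)/2 = e - 1" by (simp add: e_def field_simps)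
  have fe: "(\<lambda>t. Val d X x \<theta> t m) = (\<lambda>t. t powr e * W X (c / sqrt t) m)"
    unfolding Val_def e_def c_def by (rule refl)
  have "Val (d + 2) (Tv d X) x \<theta> v m = v powr (e - 1) * W (Tv d X) z m"
    unfolding Val_def ex c_def[symmetric] z_def[symmetric] by (rule refl)
  also have "\<dots> = v powr (e - 1) * (e * W X z m - z / 2 * W (Dz X) z m)" by (simp only: WT)
  also have "\<dots> = e * v powr (e - 1) * W X z m + v powr e * (W (Dz X) z m * (- z / (2 * v)))"
    unfolding pe using v by (simp add: algebra_simps)
  finally have vv: "Val (d + 2) (Tv d X) x \<theta> v m = e * v powr (e - 1) * W X z m + v powr e * (W (Dz X) z m * (- z / (2 * v)))" .
  show ?thesis unfolding fe vv by (rule D)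
qed

lemma Dth_step:
  assumes "\<forall>x \<theta> v m. 0 < v \<longrightarrow> g x \<theta> v m = Val d X x \<theta> v m"
  shows "\<forall>x \<theta> v m. 0 < v \<longrightarrow> d_theta g x \<theta> v m = Val (Suc d) (Tth X) x \<theta> v m"
proof (intro allI impI)
  fix x \<theta> v m :: real assume v: "0 < v"
  have "(\<lambda>t. g x t v m) = (\<lambda>t. Val d X x t v m)" using assms v by auto
  then show "d_theta g x \<theta> v m = Val (Suc d) (Tth X) x \<theta> v m"
    unfolding d_theta_def using DERIV_imp_deriv[OF Val_dth[OF v]] by simp
qed

lemma Dm_step:
  assumes "\<forall>x \<theta> v m. 0 < v \<longrightarrow> g x \<theta> v m = Val d X x \<theta> v m"
  shows "\<forall>x \<theta> v m. 0 < v \<longrightarrow> d_m g x \<theta> v m = Val d (Tm X) x \<theta> v m"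
proof (intro allI impI)
  fix x \<theta> v m :: real assume v: "0 < v"
  have "(\<lambda>t. g x \<theta> v t) = (\<lambda>t. Val d X x \<theta> v t)" using assms v by auto
  then show "d_m g x \<theta> v m = Val d (Tm X) x \<theta> v m"
    unfolding d_m_def using DERIV_imp_deriv[OF Val_dm] by simp
qed

lemma Dv_step:
  assumes "\<forall>x \<theta> v m. 0 < v \<longrightarrow> g x \<theta> v m = Val d X x \<theta> v m"
  shows "\<forall>x \<theta> v m. 0 < v \<longrightarrow> d_v g x \<theta> v m = Val (d + 2) (Tv d X) x \<theta> v m"
proof (intro allI impI)
  fix x \<theta> v m :: real assume v: "0 < v"
  have "((\<lambda>t. g x \<theta> t m) has_real_derivative Val (d + 2) (Tv d X) x \<theta> v m) (at v)"
  proof (rule has_field_derivative_transform_within_open[OF Val_dv[OF v]])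
    show "open {0::real<..}" by simp
  qed (use v assms in auto)
  then show "d_v g x \<theta> v m = Val (d + 2) (Tv d X) x \<theta> v m"
    unfolding d_v_def by (rule DERIV_imp_deriv)
qed

lemma sn_eq: "std_normal_density z = cc * exp (-(z^2)/2)"
  unfolding std_normal_density_def cc_def by (rule refl)

lemma skew_Val: "\<forall>x \<theta> v m. 0 < v \<longrightarrow> skewnorm x \<theta> v m = Val 0 f0 x \<theta> v m"
proof (intro allI impI)
  fix x \<theta> v m :: real assume v: "0 < v"
  have e0: "-(real 0 + 1)/2 = - (1/2::real)" by simp
  have "v powr (-(real 0 + 1)/2) = inverse (v powr (1/2))" unfolding e0 by (rule powr_minus)
  also have "\<dots> = inverse (sqrt v)" using v by (simp only: powr_half_sqrt less_imp_le)
  finally have pw: "v powr (-(real 0 + 1)/2) = inverse (sqrt v)" .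
  have a: "m * (x - \<theta>) / sqrt v = m * ((x - \<theta>) / sqrt v)" by (rule times_divide_eq_right[symmetric])
  have k1: "skewnorm x \<theta> v m = 2 / sqrt v * std_normal_density ((x - \<theta>) / sqrt v) * Phi (m * ((x - \<theta>) / sqrt v))"
    by (simp only: skewnorm_def a)
  have Wf: "W f0 z m = 2 * cc * exp (-(z^2)/2) * Phi (m * z)" for z
    by (simp add: W_def f0_def A0_def)
  have gen: "2 / s * (cc * E) * P = inverse s * (2 * cc * E * P)" for s E P :: real
    by (simp add: divide_inverse)
  show "skewnorm x \<theta> v m = Val 0 f0 x \<theta> v m"
    unfolding k1 Val_def pw Wf sn_eq by (rule gen)
qed

lemma Dskew_Val: "0 < v \<Longrightarrow> Dskew \<alpha> x \<theta> v m = Val (dd \<alpha>) (rep \<alpha>) x \<theta> v m"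
proof -
  assume v: "0 < v"
  obtain a1 a2 a3 where a: "\<alpha> = (a1, a2, a3)" by (metis surj_pair)
  have 1: "\<forall>x \<theta> v m. 0 < v \<longrightarrow> (d_m ^^ k) skewnorm x \<theta> v m = Val 0 ((Tm ^^ k) f0) x \<theta> v m" for k
    by (induction k) (simp_all add: skew_Val Dm_step)
  have 2: "\<forall>x \<theta> v m. 0 < v \<longrightarrow> (d_v ^^ q) ((d_m ^^ k) skewnorm) x \<theta> v m = Val (2 * q) (TvIt 0 q ((Tm ^^ k) f0)) x \<theta> v m" for q k
  proof (induction q)
    case 0
    then show ?case using 1 by simp
  next
    case (Suc q)
    from Dv_step[OF this] show ?case by (simp add: algebra_simps)
  qed
  have 3: "\<forall>x \<theta> v m. 0 < v \<longrightarrow> (d_theta ^^ p) ((d_v ^^ q) ((d_m ^^ k) skewnorm)) x \<theta> v m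
     = Val (p + 2 * q) ((Tth ^^ p) (TvIt 0 q ((Tm ^^ k) f0))) x \<theta> v m" for p q k
  proof (induction p)
    case 0
    then show ?case using 2 by simp
  next
    case (Suc p)
    from Dth_step[OF this] show ?case by simp
  qed
  show ?thesis using 3 v a by (simp add: Dskew_def rep_simp)
qed


lemma Val_sc: "Val d (sc [:p:] X) x \<theta> v m = poly p m * Val d X x \<theta> v m"
  unfolding Val_def by (simp only: W_sc ev_const mult.left_commute)

lemma Val_add: "Val d (X + Y) x \<theta> v m = Val d X x \<theta> v m + Val d Y x \<theta> v m"
  unfolding Val_def by (simp only: W_add distrib_left)

lemma Val_zero: "Val d 0 x \<theta> v m = 0"
  unfolding Val_def by (simp only: W_zero mult_zero_right)

lemma Val_sum: "Val d (sum f S) x \<theta> v m = (\<Sum>i\<in>S. Val d (f i) x \<theta> v m)"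
  by (induction S rule: infinite_finite_induct) (simp_all add: Val_add Val_zero)

lemma Val_shift:
  assumes v: "0 < v" and "d' \<le> d" "even (d - d')"
  shows "Val d X x \<theta> v m = Val d' X x \<theta> v m / v ^ ((d - d') div 2)"
proof -
  define k where "k = (d - d') div 2"
  have dk: "d = d' + 2 * k" using assms(2,3) by (auto simp: k_def elim!: evenE)
  have "-(real d + 1)/2 = -(real d' + 1)/2 - real k" using dk by (simp add: field_simps)
  then have "v powr (-(real d + 1)/2) = v powr (-(real d' + 1)/2) / v powr (real k)"
    by (simp only: powr_diff)
  also have "v powr (real k) = v ^ k" using v by (rule powr_realpow)
  finally have "v powr (-(real d + 1)/2) = v powr (-(real d' + 1)/2) / v ^ k" .
  then show ?thesis unfolding Val_def k_def[symmetric] by (simp only: times_divide_eq_left)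
qed

theorem lemma4p2:
  fixes \<alpha> :: "nat \<times> nat \<times> nat"
  shows "\<exists>P H Q :: nat \<times> nat \<times> nat \<Rightarrow> real poly.
     (\<forall>\<kappa>\<in>Kset \<alpha>. \<forall>m::real. m \<noteq> 0 \<longrightarrow> poly (H \<kappa>) m \<noteq> 0) \<and>
     (\<forall>\<kappa>\<in>Kset \<alpha>. \<forall>v::real. v > 0 \<longrightarrow> poly (Q \<kappa>) v \<noteq> 0) \<and>
     (\<forall>x \<theta> v m :: real. v > 0 \<longrightarrow> m \<noteq> 0 \<longrightarrow>
        Dskew \<alpha> x \<theta> v m =
        (\<Sum>\<kappa>\<in>Kset \<alpha>. poly (P \<kappa>) m / (poly (H \<kappa>) m * poly (Q \<kappa>) v) * Dskew \<kappa> x \<theta> v m))"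
proof -
  obtain H P where 1: "\<forall>m::real. m \<noteq> 0 \<longrightarrow> poly H m \<noteq> 0"
    "\<forall>\<kappa>\<in>Kset \<alpha>. P \<kappa> \<noteq> 0 \<longrightarrow> dd \<kappa> \<le> dd \<alpha> \<and> even (dd \<alpha> - dd \<kappa>)"
    "sc [:H:] (rep \<alpha>) = (\<Sum>\<kappa>\<in>Kset \<alpha>. sc [:P \<kappa>:] (rep \<kappa>))"
    using main_span[of \<alpha>] unfolding SpanK_def by blast
  define Q where "Q \<kappa> = (monom 1 ((dd \<alpha> - dd \<kappa>) div 2) :: real poly)" for \<kappa>
  have main: "Dskew \<alpha> x \<theta> v m =
        (\<Sum>\<kappa>\<in>Kset \<alpha>. poly (P \<kappa>) m / (poly H m * poly (Q \<kappa>) v) * Dskew \<kappa> x \<theta> v m)"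
    if v: "0 < v" and m: "m \<noteq> 0" for x \<theta> v m :: real
  proof -
    have Hm: "poly H m \<noteq> 0" using 1(1) m by auto
    have "poly H m * Dskew \<alpha> x \<theta> v m = Val (dd \<alpha>) (sc [:H:] (rep \<alpha>)) x \<theta> v m"
      using Dskew_Val[OF v] by (simp add: Val_sc)
    also have "\<dots> = (\<Sum>\<kappa>\<in>Kset \<alpha>. poly (P \<kappa>) m * Val (dd \<alpha>) (rep \<kappa>) x \<theta> v m)"
      by (simp only: 1(3) Val_sum Val_sc)
    also have "\<dots> = (\<Sum>\<kappa>\<in>Kset \<alpha>. poly (P \<kappa>) m * (Dskew \<kappa> x \<theta> v m / poly (Q \<kappa>) v))"
    proof (rule sum.cong[OF refl])
      fix \<kappa> assume k: "\<kappa> \<in> Kset \<alpha>"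
      show "poly (P \<kappa>) m * Val (dd \<alpha>) (rep \<kappa>) x \<theta> v m = poly (P \<kappa>) m * (Dskew \<kappa> x \<theta> v m / poly (Q \<kappa>) v)"
      proof (cases "P \<kappa> = 0")
        case True
        then show ?thesis by simp
      next
        case False
        then have c: "dd \<kappa> \<le> dd \<alpha>" "even (dd \<alpha> - dd \<kappa>)" using 1(2) k by auto
        have "Val (dd \<alpha>) (rep \<kappa>) x \<theta> v m = Val (dd \<kappa>) (rep \<kappa>) x \<theta> v m / v ^ ((dd \<alpha> - dd \<kappa>) div 2)"
          by (rule Val_shift[OF v c])
        also have "\<dots> = Dskew \<kappa> x \<theta> v m / poly (Q \<kappa>) v"
          using Dskew_Val[OF v, of \<kappa>] by (simp add: Q_def poly_monom)
        finally show ?thesis by simp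
      qed
    qed
    finally have eq: "poly H m * Dskew \<alpha> x \<theta> v m = (\<Sum>\<kappa>\<in>Kset \<alpha>. poly (P \<kappa>) m * (Dskew \<kappa> x \<theta> v m / poly (Q \<kappa>) v))" .
    have "Dskew \<alpha> x \<theta> v m = inverse (poly H m) * (poly H m * Dskew \<alpha> x \<theta> v m)"
      using Hm by simp
    also have "\<dots> = inverse (poly H m) * (\<Sum>\<kappa>\<in>Kset \<alpha>. poly (P \<kappa>) m * (Dskew \<kappa> x \<theta> v m / poly (Q \<kappa>) v))"
      by (simp only: eq)
    also have "\<dots> = (\<Sum>\<kappa>\<in>Kset \<alpha>. inverse (poly H m) * (poly (P \<kappa>) m * (Dskew \<kappa> x \<theta> v m / poly (Q \<kappa>) v)))"
      by (rule sum_distrib_left)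
    also have "\<dots> = (\<Sum>\<kappa>\<in>Kset \<alpha>. poly (P \<kappa>) m / (poly H m * poly (Q \<kappa>) v) * Dskew \<kappa> x \<theta> v m)"
      by (rule sum.cong[OF refl]) (simp add: divide_inverse)
    finally show ?thesis .
  qed
  define Hf where "Hf \<kappa> = H" for \<kappa> :: "nat \<times> nat \<times> nat"
  have A: "\<forall>\<kappa>\<in>Kset \<alpha>. \<forall>m::real. m \<noteq> 0 \<longrightarrow> poly (Hf \<kappa>) m \<noteq> 0" using 1(1) by (auto simp: Hf_def)
  have B: "\<forall>\<kappa>\<in>Kset \<alpha>. \<forall>v::real. v > 0 \<longrightarrow> poly (Q \<kappa>) v \<noteq> 0" by (simp add: Q_def poly_monom)
  have C: "\<forall>x \<theta> v m :: real. v > 0 \<longrightarrow> m \<noteq> 0 \<longrightarrow>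
        Dskew \<alpha> x \<theta> v m = (\<Sum>\<kappa>\<in>Kset \<alpha>. poly (P \<kappa>) m / (poly (Hf \<kappa>) m * poly (Q \<kappa>) v) * Dskew \<kappa> x \<theta> v m)"
    using main by (simp add: Hf_def)
  show ?thesis using A B C by blast
qed

end
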